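(* Let $N\ge1$ be an integer, let $\alpha>-1$ be real, and for $z\in\mathbb{C}\setminus\{0\}$ define $$H(z,N,\alpha)=\frac{\Gamma(N+1)}{(\alpha+2)_N}\sum_{m=0}^{N-1}\frac{(\alpha+1)_m}{m!}\,z^{-m}.$$ Then $$H(z,N,\alpha)=\frac{N}{N+\alpha+1}\,z^{1-N}\,{}_2F_1\!\left(\begin{matrix}1-N,\ 1\\ \alpha+2\end{matrix};1-z\right).$$
   Context: $(a)_k=a(a+1)\cdots(a+k-1)$ is the Pochhammer symbol, $(a)_0=1$. ${}_2F_1\!\left(\begin{matrix}1-N,1\\ c\end{matrix};u\right)=\sum_{k=0}^{N-1}\frac{(1-N)_k(1)_k}{(c)_k\,k!}u^k$ (a polynomial in $u$). $H(z,N,\alpha)$ is the $z$-transform of the zeroth-order orthogonal (Hahn, with $\beta=0$) low-pass filter with impulse response $\frac{\Gamma(N+1)}{(\alpha+2)_N}\frac{(\alpha+1)_m}{m!}$, $0\le m\le N-1$. *)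

theory Defs
  imports "HOL-Analysis.Analysis"
begin

definition hyp2F1_poly :: "nat \<Rightarrow> real \<Rightarrow> complex \<Rightarrow> complex" where
  "hyp2F1_poly N c u =
     (\<Sum>k<N. of_real (pochhammer (1 - real N) k * pochhammer 1 k
                      / (pochhammer c k * fact k)) * u ^ k)"

definition H :: "complex \<Rightarrow> nat \<Rightarrow> real \<Rightarrow> complex" where
  "H z N \<alpha> = of_real (Gamma (real N + 1) / pochhammer (\<alpha> + 2) N) *
     (\<Sum>m<N. of_real (pochhammer (\<alpha> + 1) m / fact m) * z powi (- int m))"

end

theory Submission
  imports Defs
begin

definition tc :: "real \<Rightarrow> nat \<Rightarrow> nat \<Rightarrow> real" where
  "tc a n k = pochhammer (- real n) k / pochhammer (a + 1) k"

definition RR :: "real \<Rightarrow> nat \<Rightarrow> complex \<Rightarrow> complex" where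
  "RR a n u = (\<Sum>k\<le>n. of_real (tc a n k) * u ^ k)"

lemma tc_zero: "k > n \<Longrightarrow> tc a n k = 0"
  unfolding tc_def by (simp add: pochhammer_of_nat_eq_0_lemma)

lemma alg: fixes P D a :: real and n j :: nat assumes "D > 0" "a+1+j>0" shows
 "(a+n+1)*((- real (Suc n))*P/(D*(a+1+j))) = (n+1)*(P*(- real n + real j)/(D*(a+1+j)) - P/D)"
proof -
  have ne: "D*(a+1+j) \<noteq> 0" "D \<noteq> 0" using assms by auto
  have "P/D = P*(a+1+j)/(D*(a+1+j))" using assms by simp
  then show ?thesis using ne by (simp add: diff_divide_distrib[symmetric] algebra_simps)
qed

lemma tc_coeff:
  assumes "a > 0"
  shows "(a + n + 1) * tc a (Suc n) k =
     (n + 1) * (tc a n k - (if k = 0 then 0 else tc a n (k - 1))) + (if k = 0 then a else 0)"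
proof (cases k)
  case 0
  then show ?thesis by (simp add: tc_def)
next
  case (Suc j)
  have p1: "pochhammer (a + 1) j > 0" using assms by (intro pochhammer_pos) simp
  have e1: "pochhammer (- real (Suc n)) (Suc j) = (- real (Suc n)) * pochhammer (- real n) j"
    by (simp add: pochhammer_rec algebra_simps)
  have e2: "pochhammer (- real n) (Suc j) = pochhammer (- real n) j * (- real n + j)"
    by (simp add: pochhammer_Suc)
  have e3: "pochhammer (a + 1) (Suc j) = pochhammer (a + 1) j * (a + 1 + j)"
    by (simp add: pochhammer_Suc)
  have "a + 1 + j > 0" using assms by simp
  then have "(a + n + 1) * ((- real (Suc n)) * pochhammer (- real n) j / (pochhammer (a + 1) j * (a + 1 + j)))
     = (n + 1) * (pochhammer (- real n) j * (- real n + j) / (pochhammer (a + 1) j * (a + 1 + j))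
        - pochhammer (- real n) j / pochhammer (a + 1) j)"
    using p1 by (intro alg) auto
  then show ?thesis
    unfolding tc_def Suc diff_Suc_1 e1 e2 e3 by (simp add: mult.assoc)
qed

lemma RR_ext: "RR a n u = (\<Sum>k\<le>Suc n. of_real (tc a n k) * u ^ k)"
  by (simp add: RR_def tc_zero)

lemma RR_rec:
  assumes "a > 0"
  shows "of_real (a + n + 1) * RR a (Suc n) u = of_real (n + 1) * (1 - u) * RR a n u + of_real a"
proof -
  have "of_real (a + n + 1) * RR a (Suc n) u =
     (\<Sum>k\<le>Suc n. of_real ((a + n + 1) * tc a (Suc n) k) * u ^ k)"
    unfolding RR_def sum_distrib_left by (simp add: mult.assoc del: sum.atMost_Suc)
  also have "\<dots> = (\<Sum>k\<le>Suc n. of_real (n + 1) * (of_real (tc a n k) * u ^ k)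
       - of_real (n + 1) * (of_real (if k = 0 then 0 else tc a n (k - 1)) * u ^ k)
       + of_real (if k = 0 then a else 0) * u ^ k)"
    by (intro sum.cong refl, subst tc_coeff[OF assms]) (simp add: algebra_simps)
  also have "\<dots> = of_real (n + 1) * RR a n u
       - of_real (n + 1) * (\<Sum>k\<le>Suc n. of_real (if k = 0 then 0 else tc a n (k - 1)) * u ^ k)
       + of_real a"
  proof -
    have s1: "(\<Sum>k\<le>Suc n. of_real (real n + 1) * (of_real (tc a n k) * u ^ k)) = of_real (n + 1) * RR a n u"
      unfolding RR_ext by (simp add: sum_distrib_left add.commute del: sum.atMost_Suc)
    have s3: "(\<Sum>k\<le>Suc n. complex_of_real (if k = 0 then a else 0) * u ^ k) = of_real a"
      by (subst sum.atMost_Suc_shift) simp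
    show ?thesis
      unfolding sum.distrib sum_subtractf s1 s3 sum_distrib_left[symmetric] by (simp add: RR_def tc_zero)
  qed
  also have "(\<Sum>k\<le>Suc n. of_real (if k = 0 then 0 else tc a n (k - 1)) * u ^ k) = u * RR a n u"
    by (subst sum.atMost_Suc_shift) (simp add: RR_def sum_distrib_left algebra_simps)
  finally show ?thesis by (simp add: algebra_simps)
qed

definition QQ :: "real \<Rightarrow> nat \<Rightarrow> complex \<Rightarrow> complex" where
  "QQ a n z = (\<Sum>m\<le>n. of_real (pochhammer a m / fact m) * z ^ (n - m))"

lemma QQ_Suc: "QQ a (Suc n) z = z * QQ a n z + of_real (pochhammer a (Suc n) / fact (Suc n))"
proof -
  have "QQ a (Suc n) z = (\<Sum>m\<le>n. of_real (pochhammer a m / fact m) * z ^ (Suc n - m))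
       + of_real (pochhammer a (Suc n) / fact (Suc n))"
    by (simp add: QQ_def)
  also have "(\<Sum>m\<le>n. of_real (pochhammer a m / fact m) * z ^ (Suc n - m)) = z * QQ a n z"
    unfolding QQ_def sum_distrib_left
    by (intro sum.cong refl) (simp add: Suc_diff_le algebra_simps)
  finally show ?thesis .
qed

lemma cancel_lem: fixes F P q a :: real assumes "F \<noteq> 0" "P \<noteq> 0" "q \<noteq> 0"
  shows "F / (P * q) * (a * P / F) = a / q"
  using assms by (simp add: field_simps)

lemma key:
  assumes "a > 0"
  shows "of_real (fact n / pochhammer (a + 1) n) * QQ a n z = RR a n (1 - z)"
proof (induction n)
  case 0
  then show ?case by (simp add: QQ_def RR_def tc_def)
next
  case (Suc n)
  have p1: "pochhammer (a + 1) n > 0" using assms by (intro pochhammer_pos) simp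
  have e3: "pochhammer (a + 1) (Suc n) = pochhammer (a + 1) n * (a + n + 1)"
    by (simp add: pochhammer_Suc algebra_simps)
  have e4: "pochhammer a (Suc n) = a * pochhammer (a + 1) n"
    by (simp add: pochhammer_rec)
  have pos: "a + n + 1 > 0" using assms by simp
  have c1: "fact (Suc n) / pochhammer (a + 1) (Suc n) = (n + 1) / (a + n + 1) * (fact n / pochhammer (a + 1) n)"
    unfolding e3 using p1 pos by (simp add: field_simps)
  have c2: "fact (Suc n) / pochhammer (a + 1) (Suc n) * (pochhammer a (Suc n) / fact (Suc n)) = a / (a + n + 1)"
    unfolding e3 e4 using p1 pos by (intro cancel_lem) auto
  have ne: "complex_of_real (a + n + 1) \<noteq> 0" using pos by (simp del: of_real_add)
  have "of_real (fact (Suc n) / pochhammer (a + 1) (Suc n)) * QQ a (Suc n) z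
     = of_real (fact (Suc n) / pochhammer (a + 1) (Suc n)) * z * QQ a n z
       + of_real (fact (Suc n) / pochhammer (a + 1) (Suc n) * (pochhammer a (Suc n) / fact (Suc n)))"
    unfolding QQ_Suc distrib_left of_real_mult by (simp only: algebra_simps)
  also have "\<dots> = of_real ((n + 1) / (a + n + 1) * (fact n / pochhammer (a + 1) n)) * z * QQ a n z
       + of_real (a / (a + n + 1))"
    by (simp only: c2, simp only: c1)
  also have "\<dots> = of_real ((n + 1) / (a + n + 1)) * z * (of_real (fact n / pochhammer (a + 1) n) * QQ a n z)
       + of_real (a / (a + n + 1))"
    by (simp only: of_real_mult algebra_simps)
  also have "\<dots> = (of_real (n + 1) * (1 - (1 - z)) * RR a n (1 - z) + of_real a) / of_real (a + n + 1)"
    unfolding Suc.IH using ne by (simp add: field_simps del: of_real_add)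
  also have "\<dots> = RR a (Suc n) (1 - z)"
    using RR_rec[OF assms, of n "1 - z"] ne by (simp add: field_simps)
  finally show ?case .
qed

theorem mainTheorem3:
  fixes N :: nat and \<alpha> :: real and z :: complex
  assumes "N \<ge> 1" and "\<alpha> > -1" and "z \<noteq> 0"
  shows "H z N \<alpha> = of_real (real N / (real N + \<alpha> + 1)) * z powi (1 - int N)
           * hyp2F1_poly N (\<alpha> + 2) (1 - z)"
proof -
  define a where "a = \<alpha> + 1"
  define n where "n = N - 1"
  have a0: "a > 0" using assms a_def by simp
  have N: "N = Suc n" using assms n_def by simp
  have al2: "\<alpha> + 2 = a + 1" "\<alpha> + 1 = a" "real N + \<alpha> + 1 = a + n + 1"
    using a_def N by auto
  have hyp: "hyp2F1_poly N (\<alpha> + 2) (1 - z) = RR a n (1 - z)"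
    unfolding hyp2F1_poly_def RR_def tc_def N al2 lessThan_Suc_atMost
    by (intro sum.cong refl) (simp add: pochhammer_fact[symmetric])
  have pw: "z powi (1 - int N) = z powi (- int n)" using N by simp
  have p1: "pochhammer (a + 1) n > 0" using a0 by (intro pochhammer_pos) simp
  have pos: "a + n + 1 > 0" using a0 by simp
  have e3: "pochhammer (a + 1) (Suc n) = pochhammer (a + 1) n * (a + n + 1)"
    by (simp add: pochhammer_Suc algebra_simps)
  have cc: "real N / (a + n + 1) * (fact n / pochhammer (a + 1) n) = fact N / pochhammer (a + 1) N"
    unfolding N e3 using p1 pos by (simp add: field_simps)
  have G: "Gamma (real N + 1) = fact N"
    using Gamma_fact[of N] by (simp add: add.commute)
  have zq: "z powi (- int n) * QQ a n z = (\<Sum>m<N. of_real (pochhammer a m / fact m) * z powi (- int m))"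
    unfolding QQ_def N lessThan_Suc_atMost sum_distrib_left
  proof (intro sum.cong refl)
    fix m assume "m \<in> {..n}"
    then have "- int m = - int n + int (n - m)" by simp
    then have "z powi (- int m) = z powi (- int n + int (n - m))" by (rule arg_cong)
    also have "\<dots> = z powi (- int n) * z powi int (n - m)"
      using assms(3) by (rule power_int_add[OF disjI1])
    finally have "z powi (- int m) = z powi (- int n) * z ^ (n - m)" by simp
    then show "z powi (- int n) * (complex_of_real (pochhammer a m / fact m) * z ^ (n - m)) =
          complex_of_real (pochhammer a m / fact m) * z powi (- int m)" by simp
  qed
  have "of_real (real N / (real N + \<alpha> + 1)) * z powi (1 - int N) * hyp2F1_poly N (\<alpha> + 2) (1 - z)
     = of_real (real N / (a + n + 1)) * z powi (- int n) * (of_real (fact n / pochhammer (a + 1) n) * QQ a n z)"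
    unfolding hyp pw al2(3) key[OF a0] ..
  also have "\<dots> = of_real (real N / (a + n + 1) * (fact n / pochhammer (a + 1) n)) * (z powi (- int n) * QQ a n z)"
    by (simp add: algebra_simps)
  also have "\<dots> = H z N \<alpha>"
    unfolding cc zq H_def G al2 by simp
  finally show ?thesis by simp
qed

end
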